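(* Assume condition $(\star)$. Then, with $B^{\mathcal T}$ acting on $C^{\mathcal T}$ by right twisted convolution and $A^{\mathcal T}$ by left twisted convolution, $$\operatorname{End}_{A^{\mathcal T}}(C^{\mathcal T})=B^{\mathcal T},\qquad \operatorname{End}_{B^{\mathcal T}}(C^{\mathcal T})=A^{\mathcal T}.$$ Moreover $B^{\mathcal T}=1_\omega*A^{\mathcal T}*1_\omega$.
   Context: $\Bbbk$ is a field, $G$ a finite group, $\mathcal R$ a unital $\Bbbk$-algebra, free as a $\Bbbk$-module, with $G$ acting by $\Bbbk$-algebra automorphisms. For a finite $G$-set $Z$, $\mathcal R_G(Z)$ is the set of $G$-equivariant maps $Z\to\mathcal R$ ($f(gz)=g(f(z))$), $G$ acting diagonally on products. Let $(\Lambda,\omega)$ be a finite set with a distinguished element $\omega$; for each $\lambda\in\Lambda$ let $Y_\lambda$ be a finite $G$-set, $Y=\bigsqcup_\lambda Y_\lambda$, $X=Y_\omega$, and let $p_\lambda:X\to Y_\lambda$ be $G$-equivariant surjections with $p_\omega=\mathrm{id}$. Fix a twist $e\in\mathcal R_G(Y)$ (every $e(y)$ invertible). $A=\mathcal R_G(Y\times Y)$ with twisted convolution $(f*g)(x,y)=\sum_{z\in Y}f(x,z)e(z)^{-1}g(z,y)$ is a unital associative algebra; $A_{\lambda\mu}=\mathcal R_G(Y_\lambda\times Y_\mu)\subseteq A$ (extension by zero), $B=A_{\omega\omega}$, $C=\bigoplus_\lambda A_{\lambda\omega}$. Define: $S_\lambda\in A_{\omega\lambda}$, $S_\lambda(x,y)=\delta_{p_\lambda(x),y}e(y)$;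 $M_\lambda\in A_{\lambda\omega}$, $M_\lambda(y,x)=\delta_{y,p_\lambda(x)}e(y)$; $K_\lambda\in B$, $K_\lambda(x,x')=\delta_{p_\lambda(x),p_\lambda(x')}e(p_\lambda(x))$; $1_\lambda\in A_{\lambda\lambda}$, $1_\lambda(y,y')=\delta_{y,y'}e(y)$; $m\in\mathcal R_G(Y)$, $m(y)=\sum_{x\in p_\lambda^{-1}(y)}e(x)^{-1}e(y)$ for $y\in Y_\lambda$; for $t\in\mathcal R_G(X)$, $t_\omega\in B$, $t_\omega(x,x')=\delta_{x,x'}e(x)t(x)$. Let $\mathcal T\subseteq\mathcal R$ be a $G$-stable subring. Condition $(\star)$: for every $y\in Y$, $m(y)$ is invertible in $\mathcal R$ and $m(y),m(y)^{-1}\in\mathcal T$. $B^{\mathcal T}\subseteq B$ is the subalgebra generated by all $K_\lambda$ ($\lambda\in\Lambda$) and all $t_\omega$ with $t\in\mathcal R_G(X)$ taking values in $\mathcal T$; $A^{\mathcal T}\subseteq A$ is the subalgebra generated by $B^{\mathcal T}$ and all $S_\lambda,M_\lambda$; $C^{\mathcal T}=A^{\mathcal T}*1_\omega$, an $(A^{\mathcal T},B^{\mathcal T})$-bimodule. *)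

theory Defs
  imports Complex_Main "HOL-Algebra.Group" "HOL-Library.FuncSet"
begin

definition is_unit_r :: "'r::ring_1 \<Rightarrow> bool" where
  "is_unit_r a \<longleftrightarrow> (\<exists>u. u * a = 1 \<and> a * u = 1)"

definition rinv :: "'r::ring_1 \<Rightarrow> 'r" where
  "rinv a = (THE u. u * a = 1 \<and> a * u = 1)"

text \<open>
  G : finite group (HOL-Algebra structure), actR : action of G on the algebra R (type 'r),
  sm : scalar multiplication of the field 'k on R,
  Lam, om : the pointed finite index set, Y : the finite set Y (disjoint union),
  lab y : the index lambda with y in Y_lambda, actY : action of G on Y,
  p lambda : the map p_lambda : X -> Y_lambda, e : the twist.
  Elements of A = R_G(Y x Y) are functions 'y => 'y => 'r vanishing outside Y x Y.
\<close>

context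
  fixes G :: "('g, 'b) monoid_scheme"
    and actR :: "'g \<Rightarrow> 'r::ring_1 \<Rightarrow> 'r"
    and sm :: "'k::field \<Rightarrow> 'r \<Rightarrow> 'r"
    and Lam :: "'l set" and om :: 'l
    and Y :: "'y set" and lab :: "'y \<Rightarrow> 'l"
    and actY :: "'g \<Rightarrow> 'y \<Rightarrow> 'y"
    and p :: "'l \<Rightarrow> 'y \<Rightarrow> 'y"
    and e :: "'y \<Rightarrow> 'r"
begin

definition Yl :: "'l \<Rightarrow> 'y set" where
  "Yl l = {y \<in> Y. lab y = l}"

abbreviation X :: "'y set" where
  "X \<equiv> Yl om"

text \<open>R is a unital k-algebra (over a field it is automatically free as a k-module).\<close>
definition k_algebra :: bool where
  "k_algebra \<longleftrightarrow> vector_space sm \<and>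
     (\<forall>c x y. sm c (x * y) = sm c x * y \<and> sm c (x * y) = x * sm c y)"

definition G_acts_R :: bool where
  "G_acts_R \<longleftrightarrow>
     (\<forall>x. actR \<one>\<^bsub>G\<^esub> x = x) \<and>
     (\<forall>g\<in>carrier G. \<forall>h\<in>carrier G. \<forall>x. actR (g \<otimes>\<^bsub>G\<^esub> h) x = actR g (actR h x)) \<and>
     (\<forall>g\<in>carrier G. bij (actR g) \<and> actR g 1 = 1 \<and>
        (\<forall>x y. actR g (x + y) = actR g x + actR g y \<and> actR g (x * y) = actR g x * actR g y) \<and>
        (\<forall>c x. actR g (sm c x) = sm c (actR g x)))"

definition G_set_Y :: bool where
  "G_set_Y \<longleftrightarrow> finite Y \<and> lab ` Y \<subseteq> Lam \<and>
     (\<forall>y\<in>Y. actY \<one>\<^bsub>G\<^esub> y = y) \<and>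
     (\<forall>g\<in>carrier G. \<forall>y\<in>Y. actY g y \<in> Y \<and> lab (actY g y) = lab y) \<and>
     (\<forall>g\<in>carrier G. \<forall>h\<in>carrier G. \<forall>y\<in>Y. actY (g \<otimes>\<^bsub>G\<^esub> h) y = actY g (actY h y))"

definition proj_maps :: bool where
  "proj_maps \<longleftrightarrow>
     (\<forall>l\<in>Lam. p l ` X = Yl l \<and>
        (\<forall>g\<in>carrier G. \<forall>x\<in>X. p l (actY g x) = actY g (p l x))) \<and>
     (\<forall>x\<in>X. p om x = x)"

definition equivariant1 :: "'y set \<Rightarrow> ('y \<Rightarrow> 'r) \<Rightarrow> bool" where
  "equivariant1 Z f \<longleftrightarrow> (\<forall>g\<in>carrier G. \<forall>z\<in>Z. f (actY g z) = actR g (f z))"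

definition twist :: bool where
  "twist \<longleftrightarrow> equivariant1 Y e \<and> (\<forall>y\<in>Y. is_unit_r (e y))"

definition standing_assumptions :: bool where
  "standing_assumptions \<longleftrightarrow> group G \<and> finite (carrier G) \<and> k_algebra \<and> G_acts_R \<and>
     finite Lam \<and> om \<in> Lam \<and> G_set_Y \<and> proj_maps \<and> twist"

definition Aalg :: "('y \<Rightarrow> 'y \<Rightarrow> 'r) set" where
  "Aalg = {f. (\<forall>x y. (x \<notin> Y \<or> y \<notin> Y) \<longrightarrow> f x y = 0) \<and>
              (\<forall>g\<in>carrier G. \<forall>x\<in>Y. \<forall>y\<in>Y. f (actY g x) (actY g y) = actR g (f x y))}"

definition conv :: "('y \<Rightarrow> 'y \<Rightarrow> 'r) \<Rightarrow> ('y \<Rightarrow> 'y \<Rightarrow> 'r) \<Rightarrow> ('y \<Rightarrow> 'y \<Rightarrow> 'r)" where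
  "conv f h = (\<lambda>x y. \<Sum>z\<in>Y. f x z * rinv (e z) * h z y)"

definition scal :: "'k \<Rightarrow> ('y \<Rightarrow> 'y \<Rightarrow> 'r) \<Rightarrow> ('y \<Rightarrow> 'y \<Rightarrow> 'r)" where
  "scal c f = (\<lambda>x y. sm c (f x y))"

definition Sg :: "'l \<Rightarrow> 'y \<Rightarrow> 'y \<Rightarrow> 'r" where
  "Sg l = (\<lambda>x y. if x \<in> X \<and> y \<in> Yl l \<and> p l x = y then e y else 0)"

definition Mg :: "'l \<Rightarrow> 'y \<Rightarrow> 'y \<Rightarrow> 'r" where
  "Mg l = (\<lambda>y x. if y \<in> Yl l \<and> x \<in> X \<and> y = p l x then e y else 0)"

definition Kg :: "'l \<Rightarrow> 'y \<Rightarrow> 'y \<Rightarrow> 'r" where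
  "Kg l = (\<lambda>x x'. if x \<in> X \<and> x' \<in> X \<and> p l x = p l x' then e (p l x) else 0)"

definition one_l :: "'l \<Rightarrow> 'y \<Rightarrow> 'y \<Rightarrow> 'r" where
  "one_l l = (\<lambda>y y'. if y \<in> Yl l \<and> y = y' then e y else 0)"

definition diag_om :: "('y \<Rightarrow> 'r) \<Rightarrow> 'y \<Rightarrow> 'y \<Rightarrow> 'r" where
  "diag_om t = (\<lambda>x x'. if x \<in> X \<and> x = x' then e x * t x else 0)"

definition mfun :: "'y \<Rightarrow> 'r" where
  "mfun y = (\<Sum>x\<in>{x \<in> X. p (lab y) x = y}. rinv (e x) * e y)"

inductive_set gen_alg :: "('y \<Rightarrow> 'y \<Rightarrow> 'r) set \<Rightarrow> ('y \<Rightarrow> 'y \<Rightarrow> 'r) set"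
  for S0 :: "('y \<Rightarrow> 'y \<Rightarrow> 'r) set"
where
  gen_base: "a \<in> S0 \<Longrightarrow> a \<in> gen_alg S0"
| gen_zero: "(\<lambda>x y. 0) \<in> gen_alg S0"
| gen_add: "a \<in> gen_alg S0 \<Longrightarrow> b \<in> gen_alg S0 \<Longrightarrow> (\<lambda>x y. a x y + b x y) \<in> gen_alg S0"
| gen_scal: "a \<in> gen_alg S0 \<Longrightarrow> scal c a \<in> gen_alg S0"
| gen_mult: "a \<in> gen_alg S0 \<Longrightarrow> b \<in> gen_alg S0 \<Longrightarrow> conv a b \<in> gen_alg S0"

definition G_stable_subring :: "'r set \<Rightarrow> bool" where
  "G_stable_subring T \<longleftrightarrow> 0 \<in> T \<and> 1 \<in> T \<and>
     (\<forall>a\<in>T. \<forall>b\<in>T. a + b \<in> T \<and> a - b \<in> T \<and> a * b \<in> T) \<and>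
     (\<forall>g\<in>carrier G. \<forall>a\<in>T. actR g a \<in> T)"

definition cond_star :: "'r set \<Rightarrow> bool" where
  "cond_star T \<longleftrightarrow> (\<forall>y\<in>Y. is_unit_r (mfun y) \<and> mfun y \<in> T \<and> rinv (mfun y) \<in> T)"

definition BT :: "'r set \<Rightarrow> ('y \<Rightarrow> 'y \<Rightarrow> 'r) set" where
  "BT T = gen_alg (Kg ` Lam \<union>
             {diag_om t | t. equivariant1 X t \<and> (\<forall>x\<in>X. t x \<in> T)})"

definition AT :: "'r set \<Rightarrow> ('y \<Rightarrow> 'y \<Rightarrow> 'r) set" where
  "AT T = gen_alg (BT T \<union> Sg ` Lam \<union> Mg ` Lam)"

definition CT :: "'r set \<Rightarrow> ('y \<Rightarrow> 'y \<Rightarrow> 'r) set" where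
  "CT T = (\<lambda>a. conv a (one_l om)) ` AT T"

definition End_left :: "('y \<Rightarrow> 'y \<Rightarrow> 'r) set \<Rightarrow> ('y \<Rightarrow> 'y \<Rightarrow> 'r) set
    \<Rightarrow> (('y \<Rightarrow> 'y \<Rightarrow> 'r) \<Rightarrow> ('y \<Rightarrow> 'y \<Rightarrow> 'r)) set" where
  "End_left Al C = {\<phi>. \<phi> \<in> extensional C \<and> \<phi> \<in> C \<rightarrow> C \<and>
     (\<forall>c\<in>C. \<forall>d\<in>C. \<phi> (\<lambda>x y. c x y + d x y) = (\<lambda>x y. \<phi> c x y + \<phi> d x y)) \<and>
     (\<forall>k. \<forall>c\<in>C. \<phi> (scal k c) = scal k (\<phi> c)) \<and>
     (\<forall>a\<in>Al. \<forall>c\<in>C. \<phi> (conv a c) = conv a (\<phi> c))}"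

definition End_right :: "('y \<Rightarrow> 'y \<Rightarrow> 'r) set \<Rightarrow> ('y \<Rightarrow> 'y \<Rightarrow> 'r) set
    \<Rightarrow> (('y \<Rightarrow> 'y \<Rightarrow> 'r) \<Rightarrow> ('y \<Rightarrow> 'y \<Rightarrow> 'r)) set" where
  "End_right Ar C = {\<phi>. \<phi> \<in> extensional C \<and> \<phi> \<in> C \<rightarrow> C \<and>
     (\<forall>c\<in>C. \<forall>d\<in>C. \<phi> (\<lambda>x y. c x y + d x y) = (\<lambda>x y. \<phi> c x y + \<phi> d x y)) \<and>
     (\<forall>k. \<forall>c\<in>C. \<phi> (scal k c) = scal k (\<phi> c)) \<and>
     (\<forall>b\<in>Ar. \<forall>c\<in>C. \<phi> (conv c b) = conv (\<phi> c) b)}"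

end

end

theory Submission
  imports Defs
begin

definition rowsin :: "'y set \<Rightarrow> ('y \<Rightarrow> 'y \<Rightarrow> 'r::zero) \<Rightarrow> bool" where
  "rowsin R f \<longleftrightarrow> (\<forall>x y. x \<notin> R \<longrightarrow> f x y = 0)"
definition colsin :: "'y set \<Rightarrow> ('y \<Rightarrow> 'y \<Rightarrow> 'r::zero) \<Rightarrow> bool" where
  "colsin R f \<longleftrightarrow> (\<forall>x y. y \<notin> R \<longrightarrow> f x y = 0)"
definition fsum :: "('i \<Rightarrow> 'y \<Rightarrow> 'y \<Rightarrow> 'r::comm_monoid_add) \<Rightarrow> 'i set \<Rightarrow> 'y \<Rightarrow> 'y \<Rightarrow> 'r" where
  "fsum F A = (\<lambda>x y. \<Sum>i\<in>A. F i x y)"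

lemma rinv_unit:
  assumes "is_unit_r (u::'r::ring_1)"
  shows "rinv u * u = 1" "u * rinv u = 1"
proof -
  obtain v where v: "v * u = 1" "u * v = 1" using assms unfolding is_unit_r_def by blast
  have "rinv u = v" unfolding rinv_def
  proof (rule the_equality)
    show "v * u = 1 \<and> u * v = 1" using v by simp
    fix w assume w: "w * u = 1 \<and> u * w = 1"
    have "w = w * (u * v)" using v by simp
    also have "\<dots> = (w * u) * v" by (simp add: mult.assoc)
    finally show "w = v" using w by simp
  qed
  then show "rinv u * u = 1" "u * rinv u = 1" using v by auto
qed

lemma rinv_hom:
  assumes "is_unit_r (u::'r::ring_1)" "f 1 = 1" "\<And>a b. f (a * b) = f a * f b"
  shows "rinv (f u) = f (rinv u)"
proof -
  have "f (rinv u) * f u = 1" "f u * f (rinv u) = 1"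
    using rinv_unit[OF assms(1)] assms(2,3) by (metis)+
  then have un: "is_unit_r (f u)" unfolding is_unit_r_def by blast
  have "rinv (f u) = rinv (f u) * (f u * f (rinv u))" using \<open>f u * f (rinv u) = 1\<close> by simp
  also have "\<dots> = f (rinv u)" using rinv_unit[OF un] by (simp add: mult.assoc[symmetric])
  finally show ?thesis .
qed

locale setting =
  fixes G :: "('g, 'b) monoid_scheme"
    and actR :: "'g \<Rightarrow> 'r::ring_1 \<Rightarrow> 'r"
    and sm :: "'k::field \<Rightarrow> 'r \<Rightarrow> 'r"
    and Lam :: "'l set" and om :: 'l
    and Y :: "'y set" and lab :: "'y \<Rightarrow> 'l"
    and actY :: "'g \<Rightarrow> 'y \<Rightarrow> 'y"
    and p :: "'l \<Rightarrow> 'y \<Rightarrow> 'y"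
    and e :: "'y \<Rightarrow> 'r"
    and T :: "'r set"
  assumes SA: "standing_assumptions G actR sm Lam om Y lab actY p e"
    and ST: "G_stable_subring G actR T"
    and CS: "cond_star om Y lab p e T"
begin

abbreviation "cv \<equiv> conv Y e"
abbreviation "oo \<equiv> one_l Y lab e"
abbreviation "XX \<equiv> Yl Y lab om"
abbreviation "YL \<equiv> Yl Y lab"
abbreviation "SS \<equiv> Sg om Y lab p e"
abbreviation "MM \<equiv> Mg om Y lab p e"
abbreviation "KK \<equiv> Kg om Y lab p e"
abbreviation "BB \<equiv> BT G actR sm Lam om Y lab actY p e T"
abbreviation "AA \<equiv> AT G actR sm Lam om Y lab actY p e T"
abbreviation "CC \<equiv> CT G actR sm Lam om Y lab actY p e T"
abbreviation "ga \<equiv> gen_alg sm Y e"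
abbreviation "sc \<equiv> scal sm"
abbreviation "mf \<equiv> mfun om Y lab p e"

lemma grp: "group G" using SA unfolding standing_assumptions_def by simp
lemma finY: "finite Y" using SA unfolding standing_assumptions_def G_set_Y_def by simp
lemma finL: "finite Lam" using SA unfolding standing_assumptions_def by simp
lemma omL: "om \<in> Lam" using SA unfolding standing_assumptions_def by simp
lemma labL: "y \<in> Y \<Longrightarrow> lab y \<in> Lam" using SA unfolding standing_assumptions_def G_set_Y_def by auto
lemma actY_in: "g \<in> carrier G \<Longrightarrow> y \<in> Y \<Longrightarrow> actY g y \<in> Y \<and> lab (actY g y) = lab y"
  using SA unfolding standing_assumptions_def G_set_Y_def by simp
lemma actY_one: "y \<in> Y \<Longrightarrow> actY \<one>\<^bsub>G\<^esub> y = y"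
  using SA unfolding standing_assumptions_def G_set_Y_def by simp
lemma actY_mult: "g \<in> carrier G \<Longrightarrow> h \<in> carrier G \<Longrightarrow> y \<in> Y \<Longrightarrow> actY (g \<otimes>\<^bsub>G\<^esub> h) y = actY g (actY h y)"
  using SA unfolding standing_assumptions_def G_set_Y_def by simp
lemma p_img: "l \<in> Lam \<Longrightarrow> p l ` XX = YL l"
  using SA unfolding standing_assumptions_def proj_maps_def by simp
lemma p_eq: "l \<in> Lam \<Longrightarrow> g \<in> carrier G \<Longrightarrow> x \<in> XX \<Longrightarrow> p l (actY g x) = actY g (p l x)"
  using SA unfolding standing_assumptions_def proj_maps_def by simp
lemma p_om: "x \<in> XX \<Longrightarrow> p om x = x"
  using SA unfolding standing_assumptions_def proj_maps_def by simp
lemma e_eq: "g \<in> carrier G \<Longrightarrow> y \<in> Y \<Longrightarrow> e (actY g y) = actR g (e y)"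
  using SA unfolding standing_assumptions_def twist_def equivariant1_def by simp
lemma e_unit: "y \<in> Y \<Longrightarrow> is_unit_r (e y)"
  using SA unfolding standing_assumptions_def twist_def by simp
lemma e_inv: "y \<in> Y \<Longrightarrow> rinv (e y) * e y = 1" "y \<in> Y \<Longrightarrow> e y * rinv (e y) = 1"
  using rinv_unit e_unit by blast+
lemma vs: "vector_space sm" using SA unfolding standing_assumptions_def k_algebra_def by simp
lemma sm_mult_all: "\<forall>c x y. sm c (x * y) = sm c x * y \<and> sm c (x * y) = x * sm c y"
  using SA unfolding standing_assumptions_def k_algebra_def by blast
lemma sm_mult: "sm c (x * y) = sm c x * y" "sm c (x * y) = x * sm c y"
  using sm_mult_all by blast+
lemma actR_props: "g \<in> carrier G \<Longrightarrow> actR g 1 = 1 \<and> (\<forall>x y. actR g (x + y) = actR g x + actR g y \<and> actR g (x * y) = actR g x * actR g y)"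
  using SA unfolding standing_assumptions_def G_acts_R_def by simp

sublocale vs: vector_space sm by (rule vs)

lemma YL_sub: "YL l \<subseteq> Y" unfolding Yl_def by auto
lemma YL_iff: "y \<in> YL l \<longleftrightarrow> y \<in> Y \<and> lab y = l" unfolding Yl_def by auto
lemma p_in: "l \<in> Lam \<Longrightarrow> x \<in> XX \<Longrightarrow> p l x \<in> YL l" using p_img by blast

lemma conv_assoc: "cv (cv f g) h = cv f (cv g h)"
proof (intro ext)
  fix x y
  have "cv (cv f g) h x y = (\<Sum>w\<in>Y. \<Sum>z\<in>Y. f x z * rinv (e z) * g z w * rinv (e w) * h w y)"
    unfolding conv_def by (simp add: sum_distrib_right)
  also have "\<dots> = (\<Sum>z\<in>Y. \<Sum>w\<in>Y. f x z * rinv (e z) * g z w * rinv (e w) * h w y)"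
    by (rule sum.swap)
  also have "\<dots> = cv f (cv g h) x y"
    unfolding conv_def by (simp add: sum_distrib_left mult.assoc)
  finally show "cv (cv f g) h x y = cv f (cv g h) x y" .
qed

lemma conv_add_l: "cv (\<lambda>x y. f x y + g x y) h = (\<lambda>x y. cv f h x y + cv g h x y)"
  unfolding conv_def by (simp add: distrib_right sum.distrib)
lemma conv_add_r: "cv h (\<lambda>x y. f x y + g x y) = (\<lambda>x y. cv h f x y + cv h g x y)"
  unfolding conv_def by (simp add: distrib_left sum.distrib)
lemma conv_zero_l: "cv (\<lambda>x y. 0) h = (\<lambda>x y. 0)"
  unfolding conv_def by simp
lemma conv_zero_r: "cv h (\<lambda>x y. 0) = (\<lambda>x y. 0)"
  unfolding conv_def by simp
lemma conv_scal_l: "cv (sc c f) h = sc c (cv f h)"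
  unfolding conv_def scal_def
  by (simp add: vs.scale_sum_right sm_mult(1))
lemma conv_scal_r: "cv h (sc c f) = sc c (cv h f)"
  unfolding conv_def scal_def
  by (simp add: vs.scale_sum_right sm_mult(2))
lemma conv_fsum_l: "cv (fsum F A) h = fsum (\<lambda>i. cv (F i) h) A"
  unfolding conv_def fsum_def by (intro ext) (simp add: sum_distrib_right, rule sum.swap)
lemma conv_fsum_r: "cv h (fsum F A) = fsum (\<lambda>i. cv h (F i)) A"
  unfolding conv_def fsum_def by (intro ext) (simp add: sum_distrib_left mult.assoc, rule sum.swap)

lemma conv_one_l: "cv (oo l) f = (\<lambda>x y. if x \<in> YL l then f x y else 0)"
proof (intro ext)
  fix x y
  have "cv (oo l) f x y = (\<Sum>z\<in>Y. if z = x then (if x \<in> YL l then f x y else 0) else 0)"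
    unfolding conv_def one_l_def
    by (rule sum.cong) (auto simp: e_inv mult.assoc[symmetric] YL_iff)
  also have "\<dots> = (if x \<in> YL l then f x y else 0)"
    by (auto simp: YL_iff finY)
  finally show "cv (oo l) f x y = (if x \<in> YL l then f x y else 0)" .
qed
lemma conv_one_r: "cv f (oo l) = (\<lambda>x y. if y \<in> YL l then f x y else 0)"
proof (intro ext)
  fix x y
  have "cv f (oo l) x y = (\<Sum>z\<in>Y. if z = y then (if y \<in> YL l then f x y else 0) else 0)"
    unfolding conv_def one_l_def
    by (rule sum.cong) (auto simp: e_inv mult.assoc YL_iff)
  also have "\<dots> = (if y \<in> YL l then f x y else 0)"
    by (auto simp: YL_iff finY)
  finally show "cv f (oo l) x y = (if y \<in> YL l then f x y else 0)" .
qed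

lemma rows_conv: "rowsin R f \<Longrightarrow> rowsin R (cv f g)"
  unfolding rowsin_def conv_def by simp
lemma cols_conv: "colsin R g \<Longrightarrow> colsin R (cv f g)"
  unfolding colsin_def conv_def by simp
lemma rows_one: "rowsin (YL l) f \<Longrightarrow> cv (oo l) f = f"
  unfolding conv_one_l rowsin_def by (intro ext) auto
lemma cols_one: "colsin (YL l) f \<Longrightarrow> cv f (oo l) = f"
  unfolding conv_one_r colsin_def by (intro ext) auto
lemma one_one: "cv (oo l) (oo l) = oo l"
  by (rule rows_one) (auto simp: rowsin_def one_l_def)

lemma blk:
  assumes "rowsin (YL r) a" "colsin (YL s) a"
  shows "cv (cv (oo l) a) (oo m) = (if l = r \<and> m = s then a else (\<lambda>x y. 0))"
  using assms unfolding conv_one_l conv_one_r rowsin_def colsin_def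
  by (intro ext) (auto simp: YL_iff)

lemma Kg_om: "KK om = oo om"
  unfolding Kg_def one_l_def by (intro ext) (auto simp: p_om)
lemma Sg_om: "SS om = oo om"
  unfolding Sg_def one_l_def by (intro ext) (auto simp: p_om)
lemma Mg_om: "MM om = oo om"
  unfolding Mg_def one_l_def by (intro ext) (auto simp: p_om)

lemma SM: "l \<in> Lam \<Longrightarrow> cv (SS l) (MM l) = KK l"
proof (intro ext)
  fix x x' assume l: "l \<in> Lam"
  show "cv (SS l) (MM l) x x' = KK l x x'"
  proof (cases "x \<in> XX")
    case True
    then have pin: "p l x \<in> YL l" "p l x \<in> Y" using p_in[OF l] YL_sub by auto
    have "cv (SS l) (MM l) x x' = (\<Sum>z\<in>Y. if z = p l x then KK l x x' else 0)"
      unfolding conv_def Sg_def Mg_def Kg_def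
      by (rule sum.cong) (use True pin in \<open>auto simp: e_inv mult.assoc\<close>)
    then show ?thesis using pin by (simp add: finY)
  next
    case False
    then show ?thesis unfolding conv_def Sg_def Kg_def by simp
  qed
qed

lemma rows_mono: "R \<subseteq> R' \<Longrightarrow> rowsin R f \<Longrightarrow> rowsin R' f"
  unfolding rowsin_def by blast
lemma cols_mono: "R \<subseteq> R' \<Longrightarrow> colsin R f \<Longrightarrow> colsin R' f"
  unfolding colsin_def by blast

lemma ga_fsum: "finite A \<Longrightarrow> (\<And>i. i \<in> A \<Longrightarrow> F i \<in> ga S) \<Longrightarrow> fsum F A \<in> ga S"
proof (induction A rule: finite_induct)
  case empty
  then show ?case by (simp add: fsum_def gen_alg.gen_zero)
next
  case (insert i A)
  have "fsum F (insert i A) = (\<lambda>x y. F i x y + fsum F A x y)"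
    using insert(1,2) by (simp add: fsum_def)
  then show ?case using insert by (simp add: gen_alg.gen_add)
qed

lemma ga_supp:
  assumes "\<And>a. a \<in> S \<Longrightarrow> rowsin R a \<and> colsin R' a" "a \<in> ga S"
  shows "rowsin R a \<and> colsin R' a"
  using assms(2)
proof (induction rule: gen_alg.induct)
  case (gen_base a) then show ?case using assms(1) by blast
next
  case gen_zero then show ?case by (simp add: rowsin_def colsin_def)
next
  case (gen_add a b) then show ?case by (simp add: rowsin_def colsin_def)
next
  case (gen_scal a c) then show ?case by (simp add: rowsin_def colsin_def scal_def)
next
  case (gen_mult a b) then show ?case using rows_conv cols_conv by blast
qed

lemma BT_supp: "b \<in> BB \<Longrightarrow> rowsin XX b \<and> colsin XX b"
  unfolding BT_def
  by (rule ga_supp) (auto simp: rowsin_def colsin_def Kg_def diag_om_def)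

lemma BT_AT: "b \<in> BB \<Longrightarrow> b \<in> AA"
  unfolding AT_def by (auto intro: gen_alg.gen_base)
lemma Sg_AT: "l \<in> Lam \<Longrightarrow> SS l \<in> AA"
  unfolding AT_def by (auto intro: gen_alg.gen_base)
lemma Mg_AT: "l \<in> Lam \<Longrightarrow> MM l \<in> AA"
  unfolding AT_def by (auto intro: gen_alg.gen_base)
lemma Kg_BT: "l \<in> Lam \<Longrightarrow> KK l \<in> BB"
  unfolding BT_def by (auto intro: gen_alg.gen_base)
lemma one_BT: "oo om \<in> BB" using Kg_BT[OF omL] Kg_om by simp
lemma one_AT: "oo om \<in> AA" using BT_AT one_BT by blast
lemma AT_mult: "a \<in> AA \<Longrightarrow> b \<in> AA \<Longrightarrow> cv a b \<in> AA"
  unfolding AT_def by (rule gen_alg.gen_mult)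
lemma BT_mult: "a \<in> BB \<Longrightarrow> b \<in> BB \<Longrightarrow> cv a b \<in> BB"
  unfolding BT_def by (rule gen_alg.gen_mult)
lemma AT_add: "a \<in> AA \<Longrightarrow> b \<in> AA \<Longrightarrow> (\<lambda>x y. a x y + b x y) \<in> AA"
  unfolding AT_def by (rule gen_alg.gen_add)
lemma BT_add: "a \<in> BB \<Longrightarrow> b \<in> BB \<Longrightarrow> (\<lambda>x y. a x y + b x y) \<in> BB"
  unfolding BT_def by (rule gen_alg.gen_add)
lemma AT_scal: "a \<in> AA \<Longrightarrow> sc c a \<in> AA"
  unfolding AT_def by (rule gen_alg.gen_scal)
lemma BT_scal: "a \<in> BB \<Longrightarrow> sc c a \<in> BB"
  unfolding BT_def by (rule gen_alg.gen_scal)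
lemma AT_zero: "(\<lambda>x y. 0) \<in> AA"
  unfolding AT_def by (rule gen_alg.gen_zero)
lemma BT_zero: "(\<lambda>x y. 0) \<in> BB"
  unfolding BT_def by (rule gen_alg.gen_zero)
lemma AT_fsum: "finite A \<Longrightarrow> (\<And>i. i \<in> A \<Longrightarrow> F i \<in> AA) \<Longrightarrow> fsum F A \<in> AA"
  unfolding AT_def by (rule ga_fsum)
lemma BT_fsum: "finite A \<Longrightarrow> (\<And>i. i \<in> A \<Longrightarrow> F i \<in> BB) \<Longrightarrow> fsum F A \<in> BB"
  unfolding BT_def by (rule ga_fsum)

lemma AT_supp: "a \<in> AA \<Longrightarrow> rowsin Y a \<and> colsin Y a"
  unfolding AT_def
proof (rule ga_supp)
  fix a assume a: "a \<in> BB \<union> SS ` Lam \<union> MM ` Lam"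
  have XY: "XX \<subseteq> Y" by (rule YL_sub)
  { assume "a \<in> BB"
    then have "rowsin Y a \<and> colsin Y a" using BT_supp[of a] rows_mono[OF XY] cols_mono[OF XY] by blast }
  moreover
  { fix l assume "a = SS l"
    then have "rowsin Y a \<and> colsin Y a" by (simp add: rowsin_def colsin_def Sg_def YL_iff) }
  moreover
  { fix l assume "a = MM l"
    then have "rowsin Y a \<and> colsin Y a" by (simp add: rowsin_def colsin_def Mg_def YL_iff) }
  ultimately show "rowsin Y a \<and> colsin Y a" using a by blast
qed

lemma decomp: "cv f g = fsum (\<lambda>n. cv (cv f (oo n)) g) Lam"
proof (intro ext)
  fix x y
  have "fsum (\<lambda>n. cv (cv f (oo n)) g) Lam x y
      = (\<Sum>n\<in>Lam. \<Sum>z\<in>Y. if n = lab z then f x z * rinv (e z) * g z y else 0)"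
    unfolding fsum_def conv_one_r by (unfold conv_def, intro sum.cong refl) (auto simp: YL_iff)
  also have "\<dots> = (\<Sum>z\<in>Y. \<Sum>n\<in>Lam. if n = lab z then f x z * rinv (e z) * g z y else 0)"
    by (rule sum.swap)
  also have "\<dots> = cv f g x y"
    unfolding conv_def using finL labL by (intro sum.cong) auto
  finally show "cv f g x y = fsum (\<lambda>n. cv (cv f (oo n)) g) Lam x y" by simp
qed

lemma fsum_cong: "(\<And>i. i \<in> A \<Longrightarrow> F i = H i) \<Longrightarrow> fsum F A = fsum H A"
  unfolding fsum_def by (intro ext sum.cong) auto

lemma decomp2: "cv f g = fsum (\<lambda>n. cv (cv f (oo n)) (cv (oo n) g)) Lam"
proof -
  have "cv (cv f (oo n)) (cv (oo n) g) = cv (cv f (oo n)) g" for n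
  proof -
    have "cv (cv f (oo n)) (cv (oo n) g) = cv (cv (cv f (oo n)) (oo n)) g" by (simp only: conv_assoc)
    also have "\<dots> = cv (cv f (oo n)) g" by (simp only: conv_assoc one_one)
    finally show ?thesis .
  qed
  then have "fsum (\<lambda>n. cv (cv f (oo n)) g) Lam = fsum (\<lambda>n. cv (cv f (oo n)) (cv (oo n) g)) Lam"
    by (intro fsum_cong) simp
  then show ?thesis using decomp[of f g] by (rule trans[rotated])
qed


lemma Inv:
  assumes "a \<in> AA"
  shows "\<forall>l\<in>Lam. \<forall>m\<in>Lam. \<exists>b\<in>BB. cv (cv (oo l) a) (oo m) = cv (cv (MM l) b) (SS m)"
  using assms unfolding AT_def
proof (induction rule: gen_alg.induct)
  case (gen_base a)
  show ?case
  proof (intro ballI)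
    fix l m assume lm: "l \<in> Lam" "m \<in> Lam"
    have z: "cv (cv (MM l) (\<lambda>x y. 0)) (SS m) = (\<lambda>x y. 0)" by (simp only: conv_zero_l conv_zero_r)
    have c1: "a \<in> BB \<Longrightarrow> \<exists>b\<in>BB. cv (cv (oo l) a) (oo m) = cv (cv (MM l) b) (SS m)"
    proof -
      assume aB: "a \<in> BB"
      then have ra: "rowsin XX a" and ca: "colsin XX a" using BT_supp by auto
      have *: "cv (cv (oo l) a) (oo m) = (if l = om \<and> m = om then a else (\<lambda>x y. 0))"
        by (rule blk[OF ra ca])
      show ?thesis
      proof (cases "l = om \<and> m = om")
        case True
        have "cv (cv (MM l) a) (SS m) = a" using True
          by (simp only: Mg_om Sg_om rows_one[OF ra] cols_one[OF ca])
        moreover have "cv (cv (oo l) a) (oo m) = a" unfolding * if_P[OF True] ..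
        ultimately show ?thesis using aB by (intro bexI[of _ a]) simp_all
      next
        case False
        have **: "cv (cv (oo l) a) (oo m) = (\<lambda>x y. 0)" unfolding * if_not_P[OF False] ..
        show ?thesis by (rule bexI[OF _ BT_zero]) (simp only: ** z)
      qed
    qed
    have c2: "n \<in> Lam \<Longrightarrow> a = SS n \<Longrightarrow> \<exists>b\<in>BB. cv (cv (oo l) a) (oo m) = cv (cv (MM l) b) (SS m)" for n
    proof -
      assume n: "n \<in> Lam" "a = SS n"
      have ra: "rowsin XX a" and ca: "colsin (YL n) a" using n by (auto simp: rowsin_def colsin_def Sg_def)
      have *: "cv (cv (oo l) a) (oo m) = (if l = om \<and> m = n then a else (\<lambda>x y. 0))"
        by (rule blk[OF ra ca])
      show ?thesis
      proof (cases "l = om \<and> m = n")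
        case True
        have ra': "cv (oo om) (SS n) = SS n" using rows_one[OF ra] n(2) by simp
        have "cv (cv (MM l) (oo om)) (SS m) = a" using True n(2) ra'
          by (simp add: Mg_om one_one)
        moreover have "cv (cv (oo l) a) (oo m) = a" unfolding * if_P[OF True] ..
        ultimately show ?thesis using one_BT by (intro bexI[of _ "oo om"]) simp_all
      next
        case False
        have **: "cv (cv (oo l) a) (oo m) = (\<lambda>x y. 0)" unfolding * if_not_P[OF False] ..
        show ?thesis by (rule bexI[OF _ BT_zero]) (simp only: ** z)
      qed
    qed
    have c3: "n \<in> Lam \<Longrightarrow> a = MM n \<Longrightarrow> \<exists>b\<in>BB. cv (cv (oo l) a) (oo m) = cv (cv (MM l) b) (SS m)" for n
    proof -
      assume n: "n \<in> Lam" "a = MM n"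
      have ra: "rowsin (YL n) a" and ca: "colsin XX a" using n by (auto simp: rowsin_def colsin_def Mg_def)
      have *: "cv (cv (oo l) a) (oo m) = (if l = n \<and> m = om then a else (\<lambda>x y. 0))"
        by (rule blk[OF ra ca])
      show ?thesis
      proof (cases "l = n \<and> m = om")
        case True
        have ca': "cv (MM n) (oo om) = MM n" using cols_one[OF ca] n(2) by simp
        have "cv (cv (MM l) (oo om)) (SS m) = a" using True n(2) ca'
          by (simp add: Sg_om)
        moreover have "cv (cv (oo l) a) (oo m) = a" unfolding * if_P[OF True] ..
        ultimately show ?thesis using one_BT by (intro bexI[of _ "oo om"]) simp_all
      next
        case False
        have **: "cv (cv (oo l) a) (oo m) = (\<lambda>x y. 0)" unfolding * if_not_P[OF False] ..
        show ?thesis by (rule bexI[OF _ BT_zero]) (simp only: ** z)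
      qed
    qed
    show "\<exists>b\<in>BB. cv (cv (oo l) a) (oo m) = cv (cv (MM l) b) (SS m)"
      using gen_base c1 c2 c3 by blast
  qed
next
  case gen_zero
  show ?case
  proof (intro ballI)
    fix l m
    show "\<exists>b\<in>BB. cv (cv (oo l) (\<lambda>x y. 0)) (oo m) = cv (cv (MM l) b) (SS m)"
      by (rule bexI[OF _ BT_zero]) (simp only: conv_zero_l conv_zero_r)
  qed
next
  case (gen_add a b)
  show ?case
  proof (intro ballI)
    fix l m assume lm: "l \<in> Lam" "m \<in> Lam"
    obtain b1 where b1: "b1 \<in> BB" "cv (cv (oo l) a) (oo m) = cv (cv (MM l) b1) (SS m)"
      using gen_add lm by blast
    obtain b2 where b2: "b2 \<in> BB" "cv (cv (oo l) b) (oo m) = cv (cv (MM l) b2) (SS m)"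
      using gen_add lm by blast
    show "\<exists>c\<in>BB. cv (cv (oo l) (\<lambda>x y. a x y + b x y)) (oo m) = cv (cv (MM l) c) (SS m)"
      by (rule bexI[OF _ BT_add[OF b1(1) b2(1)]]) (simp only: conv_add_l conv_add_r b1(2) b2(2))
  qed
next
  case (gen_scal a c)
  show ?case
  proof (intro ballI)
    fix l m assume lm: "l \<in> Lam" "m \<in> Lam"
    obtain b1 where b1: "b1 \<in> BB" "cv (cv (oo l) a) (oo m) = cv (cv (MM l) b1) (SS m)"
      using gen_scal lm by blast
    show "\<exists>d\<in>BB. cv (cv (oo l) (sc c a)) (oo m) = cv (cv (MM l) d) (SS m)"
      by (rule bexI[OF _ BT_scal[OF b1(1)]]) (simp only: conv_scal_l conv_scal_r b1(2))
  qed
next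
  case (gen_mult a a')
  show ?case
  proof (intro ballI)
    fix l m assume lm: "l \<in> Lam" "m \<in> Lam"
    have "\<forall>n\<in>Lam. \<exists>b. b \<in> BB \<and> cv (cv (oo l) a) (oo n) = cv (cv (MM l) b) (SS n)"
      using gen_mult lm by blast
    from bchoice[OF this] obtain b1 where b1: "\<And>n. n \<in> Lam \<Longrightarrow> b1 n \<in> BB \<and> cv (cv (oo l) a) (oo n) = cv (cv (MM l) (b1 n)) (SS n)"
      by blast
    have "\<forall>n\<in>Lam. \<exists>b. b \<in> BB \<and> cv (cv (oo n) a') (oo m) = cv (cv (MM n) b) (SS m)"
      using gen_mult lm by blast
    from bchoice[OF this] obtain b2 where b2: "\<And>n. n \<in> Lam \<Longrightarrow> b2 n \<in> BB \<and> cv (cv (oo n) a') (oo m) = cv (cv (MM n) (b2 n)) (SS m)"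
      by blast
    have "cv (cv (oo l) (cv a a')) (oo m) = cv (cv (oo l) a) (cv a' (oo m))"
      by (simp only: conv_assoc)
    also have "\<dots> = fsum (\<lambda>n. cv (cv (cv (oo l) a) (oo n)) (cv (oo n) (cv a' (oo m)))) Lam"
      by (rule decomp2)
    also have "\<dots> = fsum (\<lambda>n. cv (cv (MM l) (cv (cv (b1 n) (KK n)) (b2 n))) (SS m)) Lam"
    proof (rule fsum_cong)
      fix n assume True: "n \<in> Lam"
      have e1: "cv (cv (oo l) a) (oo n) = cv (cv (MM l) (b1 n)) (SS n)" using b1[OF True] by blast
      have e2: "cv (oo n) (cv a' (oo m)) = cv (cv (MM n) (b2 n)) (SS m)"
        using b2[OF True] by (simp add: conv_assoc[symmetric])
      have "cv (cv (cv (oo l) a) (oo n)) (cv (oo n) (cv a' (oo m)))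
          = cv (cv (cv (MM l) (b1 n)) (SS n)) (cv (cv (MM n) (b2 n)) (SS m))"
        unfolding e1 e2 ..
      also have "\<dots> = cv (cv (MM l) (cv (cv (b1 n) (cv (SS n) (MM n))) (b2 n))) (SS m)"
        by (simp only: conv_assoc)
      finally show "cv (cv (cv (oo l) a) (oo n)) (cv (oo n) (cv a' (oo m))) =
            cv (cv (MM l) (cv (cv (b1 n) (KK n)) (b2 n))) (SS m)" using SM[OF True] by simp
    qed
    also have "\<dots> = cv (cv (MM l) (fsum (\<lambda>n. cv (cv (b1 n) (KK n)) (b2 n)) Lam)) (SS m)"
      by (simp add: conv_fsum_l conv_fsum_r)
    finally have eq: "cv (cv (oo l) (cv a a')) (oo m) = cv (cv (MM l) (fsum (\<lambda>n. cv (cv (b1 n) (KK n)) (b2 n)) Lam)) (SS m)" .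
    have mem: "fsum (\<lambda>n. cv (cv (b1 n) (KK n)) (b2 n)) Lam \<in> BB"
    proof -
      show "fsum (\<lambda>n. cv (cv (b1 n) (KK n)) (b2 n)) Lam \<in> BB"
      proof (rule BT_fsum[OF finL])
        fix n assume n: "n \<in> Lam"
        show "cv (cv (b1 n) (KK n)) (b2 n) \<in> BB"
          using BT_mult[OF BT_mult[OF conjunct1[OF b1[OF n]] Kg_BT[OF n]] conjunct1[OF b2[OF n]]] .
      qed
    qed
    show "\<exists>b\<in>BB. cv (cv (oo l) (cv a a')) (oo m) = cv (cv (MM l) b) (SS m)"
      using eq mem by blast
  qed
qed

lemma BT_sand: "b \<in> BB \<Longrightarrow> cv (cv (oo om) b) (oo om) = b"
  using BT_supp[of b] rows_one cols_one by metis

lemma part3: "BB = (\<lambda>a. cv (cv (oo om) a) (oo om)) ` AA"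
proof
  show "BB \<subseteq> (\<lambda>a. cv (cv (oo om) a) (oo om)) ` AA"
  proof
    fix b assume b: "b \<in> BB"
    then show "b \<in> (\<lambda>a. cv (cv (oo om) a) (oo om)) ` AA"
      using BT_sand[OF b] BT_AT[OF b] by (metis image_eqI)
  qed
next
  show "(\<lambda>a. cv (cv (oo om) a) (oo om)) ` AA \<subseteq> BB"
  proof
    fix c assume "c \<in> (\<lambda>a. cv (cv (oo om) a) (oo om)) ` AA"
    then obtain a where a: "a \<in> AA" and c: "c = cv (cv (oo om) a) (oo om)" by blast
    obtain b where b: "b \<in> BB" "cv (cv (oo om) a) (oo om) = cv (cv (MM om) b) (SS om)"
      using Inv[OF a] omL by blast
    have "c = b" using c b(2) BT_sand[OF b(1)] by (simp add: Mg_om Sg_om)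
    then show "c \<in> BB" using b(1) by simp
  qed
qed

lemma XX_block: "a \<in> AA \<Longrightarrow> rowsin XX a \<Longrightarrow> colsin XX a \<Longrightarrow> a \<in> BB"
proof -
  assume a: "a \<in> AA" "rowsin XX a" "colsin XX a"
  have "a = cv (cv (oo om) a) (oo om)" using a rows_one cols_one by metis
  then show "a \<in> BB" using a(1) part3 by (metis image_eqI)
qed

lemma CT_eq: "CC = (\<lambda>a. cv a (oo om)) ` AA" unfolding CT_def ..
lemma colsin_one: "colsin XX (oo om)" by (auto simp: colsin_def one_l_def)
lemma rowsin_one: "rowsin XX (oo om)" by (auto simp: rowsin_def one_l_def)
lemma C_AT: "c \<in> CC \<Longrightarrow> c \<in> AA" unfolding CT_eq using AT_mult one_AT by blast
lemma C_cols: "c \<in> CC \<Longrightarrow> colsin XX c" unfolding CT_eq using cols_conv colsin_one by blast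
lemma C_rows: "c \<in> CC \<Longrightarrow> rowsin Y c" using C_AT AT_supp by blast
lemma C_fix: "c \<in> CC \<Longrightarrow> cv c (oo om) = c" using C_cols cols_one by blast
lemma C_I: "a \<in> AA \<Longrightarrow> colsin XX a \<Longrightarrow> a \<in> CC"
  unfolding CT_eq using cols_one by (metis image_eqI)
lemma C_left: "a \<in> AA \<Longrightarrow> c \<in> CC \<Longrightarrow> cv a c \<in> CC"
  using C_I AT_mult C_AT C_cols cols_conv by blast
lemma C_right: "c \<in> CC \<Longrightarrow> b \<in> BB \<Longrightarrow> cv c b \<in> CC"
  using C_I AT_mult C_AT BT_AT BT_supp cols_conv by blast
lemma C_add: assumes c: "c \<in> CC" and d: "d \<in> CC" shows "(\<lambda>x y. c x y + d x y) \<in> CC"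
proof (rule C_I)
  show "(\<lambda>x y. c x y + d x y) \<in> AA" by (rule AT_add[OF C_AT[OF c] C_AT[OF d]])
  show "colsin XX (\<lambda>x y. c x y + d x y)" using C_cols[OF c] C_cols[OF d] by (simp add: colsin_def)
qed
lemma C_scal: assumes c: "c \<in> CC" shows "sc k c \<in> CC"
proof (rule C_I)
  show "sc k c \<in> AA" by (rule AT_scal[OF C_AT[OF c]])
  show "colsin XX (sc k c)" using C_cols[OF c] by (simp add: colsin_def scal_def)
qed
lemma one_C: "oo om \<in> CC" using C_I one_AT colsin_one by blast
lemma Mg_C: "l \<in> Lam \<Longrightarrow> MM l \<in> CC"
proof (rule C_I)
  assume l: "l \<in> Lam"
  show "MM l \<in> AA" by (rule Mg_AT[OF l])
  show "colsin XX (MM l)" by (simp add: colsin_def Mg_def)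
qed

lemma part1: "bij_betw (\<lambda>b. restrict (\<lambda>c. cv c b) CC) BB (End_left sm Y e AA CC)"
  unfolding bij_betw_def
proof (intro conjI)
  show "inj_on (\<lambda>b. restrict (\<lambda>c. cv c b) CC) BB"
  proof (rule inj_onI)
    fix b b' assume b: "b \<in> BB" "b' \<in> BB" and eq: "restrict (\<lambda>c. cv c b) CC = restrict (\<lambda>c. cv c b') CC"
    have "cv (oo om) b = cv (oo om) b'" using fun_cong[OF eq, of "oo om"] one_C by simp
    then show "b = b'" using BT_supp b rows_one by metis
  qed
  show "(\<lambda>b. restrict (\<lambda>c. cv c b) CC) ` BB = End_left sm Y e AA CC"
  proof
    show "(\<lambda>b. restrict (\<lambda>c. cv c b) CC) ` BB \<subseteq> End_left sm Y e AA CC"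
    proof
      fix f assume "f \<in> (\<lambda>b. restrict (\<lambda>c. cv c b) CC) ` BB"
      then obtain b where b: "b \<in> BB" and f: "f = restrict (\<lambda>c. cv c b) CC" by blast
      show "f \<in> End_left sm Y e AA CC"
        unfolding End_left_def f
      proof (intro CollectI conjI ballI allI)
        show "restrict (\<lambda>c. cv c b) CC \<in> extensional CC" by simp
        show "restrict (\<lambda>c. cv c b) CC \<in> CC \<rightarrow> CC" using C_right b by auto
        fix c d assume c: "c \<in> CC" and d: "d \<in> CC"
        show "restrict (\<lambda>c. cv c b) CC (\<lambda>x y. c x y + d x y) =
              (\<lambda>x y. restrict (\<lambda>c. cv c b) CC c x y + restrict (\<lambda>c. cv c b) CC d x y)"
          using c d C_add by (simp add: conv_add_l)
      next
        fix k c assume c: "c \<in> CC"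
        show "restrict (\<lambda>c. cv c b) CC (sc k c) = sc k (restrict (\<lambda>c. cv c b) CC c)"
          using c C_scal by (simp add: conv_scal_l)
      next
        fix a c assume a: "a \<in> AA" and c: "c \<in> CC"
        show "restrict (\<lambda>c. cv c b) CC (cv a c) = cv a (restrict (\<lambda>c. cv c b) CC c)"
          using a c C_left by (simp add: conv_assoc)
      qed
    qed
    show "End_left sm Y e AA CC \<subseteq> (\<lambda>b. restrict (\<lambda>c. cv c b) CC) ` BB"
    proof
      fix \<phi> assume phi: "\<phi> \<in> End_left sm Y e AA CC"
      then have exphi: "\<phi> \<in> extensional CC" and into: "\<phi> \<in> CC \<rightarrow> CC"
        and lin: "\<And>a c. a \<in> AA \<Longrightarrow> c \<in> CC \<Longrightarrow> \<phi> (cv a c) = cv a (\<phi> c)"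
        unfolding End_left_def by auto
      define b where "b = \<phi> (oo om)"
      have bC: "b \<in> CC" using into one_C b_def by auto
      have "b = cv (oo om) b"
        using lin[OF one_AT one_C] one_one b_def by simp
      then have rb: "rowsin XX b" using rows_conv rowsin_one by metis
      have bB: "b \<in> BB" using XX_block[OF C_AT[OF bC] rb C_cols[OF bC]] .
      have "\<phi> = restrict (\<lambda>c. cv c b) CC"
      proof (rule ext)
        fix c
        show "\<phi> c = restrict (\<lambda>c. cv c b) CC c"
        proof (cases "c \<in> CC")
          case True
          have "\<phi> c = \<phi> (cv c (oo om))" using C_fix[OF True] by simp
          also have "\<dots> = cv c b" using lin[OF C_AT[OF True] one_C] b_def by simp
          finally show ?thesis using True by simp
        next
          case False
          then show ?thesis using exphi by (simp add: extensional_def)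
        qed
      qed
      then show "\<phi> \<in> (\<lambda>b. restrict (\<lambda>c. cv c b) CC) ` BB" using bB by blast
    qed
  qed
qed

lemma actR_zero: "g \<in> carrier G \<Longrightarrow> actR g 0 = 0"
proof -
  assume g: "g \<in> carrier G"
  have "actR g (0 + 0) = actR g 0 + actR g 0" using actR_props[OF g] by blast
  then show ?thesis by simp
qed

lemma actR_sum: "g \<in> carrier G \<Longrightarrow> actR g (sum f A) = (\<Sum>i\<in>A. actR g (f i))"
proof (induction A rule: infinite_finite_induct)
  case (infinite A) then show ?case using actR_zero by simp
next
  case empty then show ?case using actR_zero by simp
next
  case (insert i A) then show ?case using actR_props[OF insert(4)] by simp
qed

lemma actR_rinv: "g \<in> carrier G \<Longrightarrow> is_unit_r u \<Longrightarrow> rinv (actR g u) = actR g (rinv u)"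
  using actR_props rinv_hom by metis

lemma actY_inv: "g \<in> carrier G \<Longrightarrow> y \<in> Y \<Longrightarrow> actY (inv\<^bsub>G\<^esub> g) (actY g y) = y"
proof -
  assume g: "g \<in> carrier G" and y: "y \<in> Y"
  have "actY (inv\<^bsub>G\<^esub> g) (actY g y) = actY (inv\<^bsub>G\<^esub> g \<otimes>\<^bsub>G\<^esub> g) y"
    using actY_mult[of "inv\<^bsub>G\<^esub> g" g y] g y group.inv_closed[OF grp] by simp
  also have "\<dots> = y" using group.l_inv[OF grp g] actY_one y by simp
  finally show ?thesis .
qed

lemma mf_eq:
  assumes g: "g \<in> carrier G" and y: "y \<in> Y"
  shows "mf (actY g y) = actR g (mf y)"
proof -
  define l where "l = lab y"
  have lL: "l \<in> Lam" using labL y l_def by simp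
  have labg: "lab (actY g y) = l" using actY_in[OF g y] l_def by simp
  define A where "A = {x \<in> XX. p l x = y}"
  have XY: "XX \<subseteq> Y" by (rule YL_sub)
  have img: "{x \<in> XX. p l x = actY g y} = actY g ` A"
  proof
    show "actY g ` A \<subseteq> {x \<in> XX. p l x = actY g y}"
    proof
      fix z assume "z \<in> actY g ` A"
      then obtain x where x: "x \<in> XX" "p l x = y" "z = actY g x" unfolding A_def by blast
      have "x \<in> Y" using x XY by blast
      then have "z \<in> XX" using actY_in[OF g] x by (simp add: YL_iff)
      moreover have "p l z = actY g y" using p_eq[OF lL g x(1)] x by simp
      ultimately show "z \<in> {x \<in> XX. p l x = actY g y}" by simp
    qed
    show "{x \<in> XX. p l x = actY g y} \<subseteq> actY g ` A"
    proof
      fix z assume z: "z \<in> {x \<in> XX. p l x = actY g y}"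
      define x where "x = actY (inv\<^bsub>G\<^esub> g) z"
      have ig: "inv\<^bsub>G\<^esub> g \<in> carrier G" using group.inv_closed[OF grp g] .
      have zY: "z \<in> Y" using z XY by blast
      have xX: "x \<in> XX" using actY_in[OF ig zY] z x_def by (simp add: YL_iff)
      have "actY g x = actY (g \<otimes>\<^bsub>G\<^esub> inv\<^bsub>G\<^esub> g) z" using actY_mult[OF g ig zY] x_def by simp
      also have "\<dots> = z" using group.r_inv[OF grp g] actY_one zY by simp
      finally have gx: "actY g x = z" .
      have "p l x = actY (inv\<^bsub>G\<^esub> g) (p l z)" using p_eq[OF lL ig] z x_def by simp
      also have "\<dots> = y" using z actY_inv[OF g y] by simp
      finally show "z \<in> actY g ` A" using gx xX unfolding A_def by blast
    qed
  qed
  have inj: "inj_on (actY g) A"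
  proof (rule inj_onI)
    fix x x' assume "x \<in> A" "x' \<in> A" "actY g x = actY g x'"
    then show "x = x'" using actY_inv[OF g, of x] actY_inv[OF g, of x'] XY unfolding A_def by auto
  qed
  have AY: "A \<subseteq> Y" using XY unfolding A_def by blast
  have "mf (actY g y) = (\<Sum>x\<in>actY g ` A. rinv (e x) * e (actY g y))"
    unfolding mfun_def labg img ..
  also have "\<dots> = (\<Sum>x\<in>A. rinv (e (actY g x)) * e (actY g y))"
    by (simp add: sum.reindex[OF inj])
  also have "\<dots> = (\<Sum>x\<in>A. actR g (rinv (e x) * e y))"
  proof (rule sum.cong)
    fix x assume "x \<in> A"
    then have xY: "x \<in> Y" using AY by blast
    show "rinv (e (actY g x)) * e (actY g y) = actR g (rinv (e x) * e y)"
      using e_eq[OF g xY] e_eq[OF g y] actR_rinv[OF g e_unit[OF xY]] actR_props[OF g] by simp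
  qed simp
  also have "\<dots> = actR g (mf y)"
    unfolding mfun_def A_def l_def by (rule actR_sum[OF g, symmetric])
  finally show ?thesis .
qed

lemma mf_unit: "y \<in> Y \<Longrightarrow> is_unit_r (mf y) \<and> mf y \<in> T \<and> rinv (mf y) \<in> T"
  using CS unfolding cond_star_def by blast

definition (in -) tfun :: "('y \<Rightarrow> 'r::ring_1) \<Rightarrow> ('l \<Rightarrow> 'y \<Rightarrow> 'y) \<Rightarrow> 'l \<Rightarrow> 'y \<Rightarrow> 'r" where
  "tfun m p l = (\<lambda>x. rinv (m (p l x)))"

abbreviation "tt l \<equiv> diag_om om Y lab e (tfun mf p l)"

lemma tt_BT: assumes l: "l \<in> Lam" shows "tt l \<in> BB"
proof -
  have eqv: "equivariant1 G actR actY XX (tfun mf p l)"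
    unfolding equivariant1_def tfun_def
  proof (intro ballI)
    fix g z assume g: "g \<in> carrier G" and z: "z \<in> XX"
    have pz: "p l z \<in> Y" using p_in[OF l z] YL_sub by blast
    show "rinv (mf (p l (actY g z))) = actR g (rinv (mf (p l z)))"
      using p_eq[OF l g z] mf_eq[OF g pz] actR_rinv[OF g] mf_unit[OF pz] by simp
  qed
  have inT: "\<forall>x\<in>XX. tfun mf p l x \<in> T"
    unfolding tfun_def using mf_unit p_in[OF l] YL_sub by blast
  show ?thesis unfolding BT_def
    by (rule gen_alg.gen_base) (use eqv inT in blast)
qed

lemma MT: assumes l: "l \<in> Lam"
  shows "cv (MM l) (tt l) = (\<lambda>y x. if x \<in> XX \<and> y \<in> YL l \<and> y = p l x then e y * tfun mf p l x else 0)"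
proof (intro ext)
  fix y x
  have XY: "XX \<subseteq> Y" by (rule YL_sub)
  have "cv (MM l) (tt l) y x = (\<Sum>z\<in>Y. if z = x then (if x \<in> XX then MM l y x * rinv (e x) * (e x * tfun mf p l x) else 0) else 0)"
    unfolding conv_def by (rule sum.cong) (auto simp: diag_om_def)
  also have "\<dots> = (if x \<in> XX then MM l y x * rinv (e x) * (e x * tfun mf p l x) else 0)"
    using XY finY by auto
  also have "\<dots> = (if x \<in> XX \<and> y \<in> YL l \<and> y = p l x then e y * tfun mf p l x else 0)"
  proof (cases "x \<in> XX")
    case True
    then have "rinv (e x) * (e x * tfun mf p l x) = tfun mf p l x"
      using e_inv(1)[of x] XY by (auto simp: mult.assoc[symmetric])
    then show ?thesis using True by (auto simp: Mg_def mult.assoc)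
  qed simp
  finally show "cv (MM l) (tt l) y x = (if x \<in> XX \<and> y \<in> YL l \<and> y = p l x then e y * tfun mf p l x else 0)" .
qed

lemma MTS: assumes l: "l \<in> Lam"
  shows "cv (cv (MM l) (tt l)) (SS l) = oo l"
proof (intro ext)
  fix y y'
  have XY: "XX \<subseteq> Y" by (rule YL_sub)
  show "cv (cv (MM l) (tt l)) (SS l) y y' = oo l y y'"
  proof (cases "y \<in> YL l \<and> y' = y")
    case True
    have yY: "y \<in> Y" and ly: "lab y = l" using True by (auto simp: YL_iff)
    have "cv (cv (MM l) (tt l)) (SS l) y y'
        = (\<Sum>x\<in>Y. if x \<in> XX \<and> p l x = y then e y * rinv (mf y) * (rinv (e x) * e y) else 0)"
      unfolding MT[OF l]
      by (unfold conv_def, rule sum.cong) (use True in \<open>auto simp: Sg_def tfun_def mult.assoc\<close>)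
    also have "\<dots> = (\<Sum>x\<in>{x \<in> Y. x \<in> XX \<and> p l x = y}. e y * rinv (mf y) * (rinv (e x) * e y))"
      using finY by (simp add: sum.inter_filter)
    also have "{x \<in> Y. x \<in> XX \<and> p l x = y} = {x \<in> XX. p (lab y) x = y}" using XY ly by auto
    also have "(\<Sum>x\<in>{x \<in> XX. p (lab y) x = y}. e y * rinv (mf y) * (rinv (e x) * e y))
        = e y * rinv (mf y) * mf y"
      unfolding mfun_def by (simp add: sum_distrib_left)
    also have "\<dots> = e y" using rinv_unit(1)[of "mf y"] mf_unit[OF yY] by (simp add: mult.assoc)
    finally show ?thesis using True by (simp add: one_l_def)
  next
    case False
    have "cv (cv (MM l) (tt l)) (SS l) y y' = (\<Sum>x\<in>Y. 0)"
      unfolding MT[OF l]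
      by (unfold conv_def, rule sum.cong) (use False in \<open>auto simp: Sg_def\<close>)
    then show ?thesis using False by (auto simp: one_l_def)
  qed
qed

lemma conv_M: assumes l: "l \<in> Lam" and x: "x \<in> XX" shows "cv a (MM l) y x = a y (p l x)"
proof -
  have px: "p l x \<in> YL l" using p_in[OF l x] .
  then have pY: "p l x \<in> Y" using YL_sub by blast
  have "cv a (MM l) y x = (\<Sum>w\<in>Y. if w = p l x then a y (p l x) else 0)"
    unfolding conv_def
  proof (rule sum.cong)
    fix w assume "w \<in> Y"
    show "a y w * rinv (e w) * MM l w x = (if w = p l x then a y (p l x) else 0)"
      using px x e_inv(1)[OF pY] by (auto simp: Mg_def mult.assoc)
  qed simp
  also have "\<dots> = a y (p l x)" using pY finY by simp
  finally show ?thesis .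
qed

lemma row_decomp: "rowsin Y c \<Longrightarrow> c = fsum (\<lambda>l. cv (oo l) c) Lam"
proof (intro ext)
  fix x y assume r: "rowsin Y c"
  show "c x y = fsum (\<lambda>l. cv (oo l) c) Lam x y"
  proof (cases "x \<in> Y")
    case True
    have "fsum (\<lambda>l. cv (oo l) c) Lam x y = (\<Sum>l\<in>Lam. if l = lab x then c x y else 0)"
      unfolding fsum_def conv_one_l using True by (intro sum.cong) (auto simp: YL_iff)
    also have "\<dots> = c x y" using labL[OF True] finL by simp
    finally show ?thesis by simp
  next
    case False
    then show ?thesis using r unfolding fsum_def conv_one_l rowsin_def by (simp add: YL_iff)
  qed
qed

lemma zero_C: "(\<lambda>x y. 0) \<in> CC"
  by (rule C_I[OF AT_zero]) (simp add: colsin_def)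

lemma fsum_empty: "fsum F {} = (\<lambda>x y. 0)" by (simp add: fsum_def)
lemma fsum_insert: "finite A \<Longrightarrow> i \<notin> A \<Longrightarrow> fsum F (insert i A) = (\<lambda>x y. F i x y + fsum F A x y)"
  by (simp add: fsum_def)

lemma phi_fsum:
  fixes \<phi> :: "('y \<Rightarrow> 'y \<Rightarrow> 'r) \<Rightarrow> 'y \<Rightarrow> 'y \<Rightarrow> 'r"
  assumes add: "\<And>c d. c \<in> CC \<Longrightarrow> d \<in> CC \<Longrightarrow> \<phi> (\<lambda>x y. c x y + d x y) = (\<lambda>x y. \<phi> c x y + \<phi> d x y)"
    and fin: "finite A" and FC: "\<And>i. i \<in> A \<Longrightarrow> F i \<in> CC"
  shows "fsum F A \<in> CC \<and> \<phi> (fsum F A) = fsum (\<lambda>i. \<phi> (F i)) A"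
  using fin FC
proof (induction A rule: finite_induct)
  case empty
  have z0: "\<phi> (\<lambda>x y. 0) = (\<lambda>x y. \<phi> (\<lambda>x y. 0) x y + \<phi> (\<lambda>x y. 0) x y)"
    using add[OF zero_C zero_C] unfolding add_0_left .
  have "\<phi> (\<lambda>x y. 0) x y = \<phi> (\<lambda>x y. 0) x y + \<phi> (\<lambda>x y. 0) x y" for x y
    using fun_cong[OF fun_cong[OF z0, of x], of y] .
  then have "\<phi> (\<lambda>x y. 0) x y = 0" for x y
    using add_cancel_right_right[of "\<phi> (\<lambda>x y. 0) x y" "\<phi> (\<lambda>x y. 0) x y"] by blast
  then have "\<phi> (\<lambda>x y. 0) = (\<lambda>x y. 0)" by (intro ext)
  then show ?case using zero_C by (simp add: fsum_empty)
next
  case (insert i A)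
  then have IH: "fsum F A \<in> CC" "\<phi> (fsum F A) = fsum (\<lambda>i. \<phi> (F i)) A" by auto
  have Fi: "F i \<in> CC" using insert by auto
  show ?case
    unfolding fsum_insert[OF insert(1,2)]
    using C_add[OF Fi IH(1)] add[OF Fi IH(1)] IH(2) by simp
qed

lemma rows_tt: "rowsin XX (tt l)" by (simp add: rowsin_def diag_om_def)

lemma part2: "bij_betw (\<lambda>a. restrict (\<lambda>c. cv a c) CC) AA (End_right sm Y e BB CC)"
  unfolding bij_betw_def
proof (intro conjI)
  show "inj_on (\<lambda>a. restrict (\<lambda>c. cv a c) CC) AA"
  proof (rule inj_onI)
    fix a a' assume a: "a \<in> AA" "a' \<in> AA" and eq: "restrict (\<lambda>c. cv a c) CC = restrict (\<lambda>c. cv a' c) CC"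
    show "a = a'"
    proof (intro ext)
      fix y z
      show "a y z = a' y z"
      proof (cases "z \<in> Y")
        case True
        define l where "l = lab z"
        have lL: "l \<in> Lam" using labL[OF True] l_def by simp
        have "z \<in> YL l" using True l_def by (simp add: YL_iff)
        then obtain x where x: "x \<in> XX" "z = p l x" using p_img[OF lL] by blast
        have "cv a (MM l) = cv a' (MM l)" using fun_cong[OF eq, of "MM l"] Mg_C[OF lL] by simp
        then have "cv a (MM l) y x = cv a' (MM l) y x" by simp
        then show ?thesis using conv_M[OF lL x(1)] x(2) by simp
      next
        case False
        then show ?thesis using AT_supp a unfolding colsin_def by metis
      qed
    qed
  qed
  show "(\<lambda>a. restrict (\<lambda>c. cv a c) CC) ` AA = End_right sm Y e BB CC"
  proof
    show "(\<lambda>a. restrict (\<lambda>c. cv a c) CC) ` AA \<subseteq> End_right sm Y e BB CC"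
    proof
      fix f assume "f \<in> (\<lambda>a. restrict (\<lambda>c. cv a c) CC) ` AA"
      then obtain a where a: "a \<in> AA" and f: "f = restrict (\<lambda>c. cv a c) CC" by blast
      show "f \<in> End_right sm Y e BB CC"
        unfolding End_right_def f
      proof (intro CollectI conjI ballI allI)
        show "restrict (\<lambda>c. cv a c) CC \<in> extensional CC" by simp
        show "restrict (\<lambda>c. cv a c) CC \<in> CC \<rightarrow> CC" using C_left a by auto
        fix c d assume c: "c \<in> CC" and d: "d \<in> CC"
        show "restrict (\<lambda>c. cv a c) CC (\<lambda>x y. c x y + d x y) =
              (\<lambda>x y. restrict (\<lambda>c. cv a c) CC c x y + restrict (\<lambda>c. cv a c) CC d x y)"
          using c d C_add by (simp add: conv_add_r)
      next
        fix k c assume c: "c \<in> CC"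
        show "restrict (\<lambda>c. cv a c) CC (sc k c) = sc k (restrict (\<lambda>c. cv a c) CC c)"
          using c C_scal by (simp add: conv_scal_r)
      next
        fix b c assume b: "b \<in> BB" and c: "c \<in> CC"
        show "restrict (\<lambda>c. cv a c) CC (cv c b) = cv (restrict (\<lambda>c. cv a c) CC c) b"
          using b c C_right by (simp add: conv_assoc)
      qed
    qed
    show "End_right sm Y e BB CC \<subseteq> (\<lambda>a. restrict (\<lambda>c. cv a c) CC) ` AA"
    proof
      fix \<phi> assume phi: "\<phi> \<in> End_right sm Y e BB CC"
      then have exphi: "\<phi> \<in> extensional CC" and into: "\<phi> \<in> CC \<rightarrow> CC"
        and add: "\<And>c d. c \<in> CC \<Longrightarrow> d \<in> CC \<Longrightarrow> \<phi> (\<lambda>x y. c x y + d x y) = (\<lambda>x y. \<phi> c x y + \<phi> d x y)"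
        and rlin: "\<And>b c. b \<in> BB \<Longrightarrow> c \<in> CC \<Longrightarrow> \<phi> (cv c b) = cv (\<phi> c) b"
        unfolding End_right_def by auto
      define a where "a = fsum (\<lambda>l. cv (cv (\<phi> (MM l)) (tt l)) (SS l)) Lam"
      have aA: "a \<in> AA" unfolding a_def
      proof (rule AT_fsum[OF finL])
        fix l assume l: "l \<in> Lam"
        have "\<phi> (MM l) \<in> CC" using into Mg_C[OF l] by auto
        then show "cv (cv (\<phi> (MM l)) (tt l)) (SS l) \<in> AA"
          using AT_mult C_AT BT_AT tt_BT[OF l] Sg_AT[OF l] by blast
      qed
      have "\<phi> = restrict (\<lambda>c. cv a c) CC"
      proof (rule ext)
        fix c
        show "\<phi> c = restrict (\<lambda>c. cv a c) CC c"
        proof (cases "c \<in> CC")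
          case True
          define bb where "bb l = cv (cv (tt l) (SS l)) c" for l
          have bbB: "bb l \<in> BB" if l: "l \<in> Lam" for l
          proof (rule XX_block)
            show "bb l \<in> AA" unfolding bb_def
              using AT_mult BT_AT tt_BT[OF l] Sg_AT[OF l] C_AT[OF True] by blast
            show "rowsin XX (bb l)" unfolding bb_def using rows_conv rows_tt by blast
            show "colsin XX (bb l)" unfolding bb_def using cols_conv C_cols[OF True] by blast
          qed
          have ol: "cv (oo l) c = cv (MM l) (bb l)" if l: "l \<in> Lam" for l
          proof -
            have "cv (oo l) c = cv (cv (cv (MM l) (tt l)) (SS l)) c" using MTS[OF l] by simp
            also have "\<dots> = cv (MM l) (bb l)" unfolding bb_def by (simp only: conv_assoc)
            finally show ?thesis .
          qed
          have "c = fsum (\<lambda>l. cv (oo l) c) Lam" by (rule row_decomp[OF C_rows[OF True]])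
          also have "\<dots> = fsum (\<lambda>l. cv (MM l) (bb l)) Lam" by (rule fsum_cong) (rule ol)
          finally have cdec: "c = fsum (\<lambda>l. cv (MM l) (bb l)) Lam" .
          have mem: "\<And>l. l \<in> Lam \<Longrightarrow> cv (MM l) (bb l) \<in> CC" using C_right Mg_C bbB by blast
          have "\<phi> c = fsum (\<lambda>l. \<phi> (cv (MM l) (bb l))) Lam"
            using arg_cong[OF cdec, of \<phi>] conjunct2[OF phi_fsum[where \<phi>=\<phi> and A=Lam and F="\<lambda>l. cv (MM l) (bb l)", OF add finL mem]]
            by (rule trans)
          also have "\<dots> = fsum (\<lambda>l. cv (\<phi> (MM l)) (bb l)) Lam"
            by (rule fsum_cong) (use rlin bbB Mg_C in blast)
          also have "\<dots> = cv a c"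
            unfolding a_def conv_fsum_l bb_def by (rule fsum_cong) (simp only: conv_assoc)
          finally show ?thesis using True by simp
        next
          case False
          then show ?thesis using exphi by (simp add: extensional_def)
        qed
      qed
      then show "\<phi> \<in> (\<lambda>a. restrict (\<lambda>c. cv a c) CC) ` AA" using aA by blast
    qed
  qed
qed

end

theorem theorem4:
  fixes G :: "('g, 'b) monoid_scheme"
    and actR :: "'g \<Rightarrow> 'r::ring_1 \<Rightarrow> 'r"
    and sm :: "'k::field \<Rightarrow> 'r \<Rightarrow> 'r"
    and Lam :: "'l set" and om :: 'l
    and Y :: "'y set" and lab :: "'y \<Rightarrow> 'l"
    and actY :: "'g \<Rightarrow> 'y \<Rightarrow> 'y"
    and p :: "'l \<Rightarrow> 'y \<Rightarrow> 'y"
    and e :: "'y \<Rightarrow> 'r"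
    and T :: "'r set"
  assumes "standing_assumptions G actR sm Lam om Y lab actY p e"
    and "G_stable_subring G actR T"
    and "cond_star om Y lab p e T"
  shows
    "bij_betw (\<lambda>b. restrict (\<lambda>c. conv Y e c b) (CT G actR sm Lam om Y lab actY p e T))
        (BT G actR sm Lam om Y lab actY p e T)
        (End_left sm Y e (AT G actR sm Lam om Y lab actY p e T) (CT G actR sm Lam om Y lab actY p e T))
   \<and> bij_betw (\<lambda>a. restrict (\<lambda>c. conv Y e a c) (CT G actR sm Lam om Y lab actY p e T))
        (AT G actR sm Lam om Y lab actY p e T)
        (End_right sm Y e (BT G actR sm Lam om Y lab actY p e T) (CT G actR sm Lam om Y lab actY p e T))
   \<and> BT G actR sm Lam om Y lab actY p e T =
       (\<lambda>a. conv Y e (conv Y e (one_l Y lab e om) a) (one_l Y lab e om)) ` AT G actR sm Lam om Y lab actY p e T"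
proof -
  interpret S: setting G actR sm Lam om Y lab actY p e T
    using assms by (simp add: setting_def)
  show ?thesis using S.part1 S.part2 S.part3 by blast
qed

end
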